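(* Let $\beta\ge 1$ and let $\overline R$ and $R$ be two consecutive $\beta$-bounded $T$-coverings (i.e. the initial state of $R$ equals the final state of $\overline R$) in a congestion game in which every delay function is $f(x)=x$, and assume $\mathrm{OPT}>0$. Then $$\frac{\rho(R)}{\mathrm{OPT}}\le 2\sqrt{2\,\frac{\rho(\overline R)}{\mathrm{OPT}}}+4\beta+1.$$
   Context: A congestion game has players $N=\{1,\dots,n\}$, a finite resource set $E$ and strategy sets $\Sigma_i\subseteq 2^E$. For a profile $S=(s_1,\dots,s_n)$, $n_e(S)=|\{i: e\in s_i\}|$. Here all delays are $f(x)=x$, so the cost of player $i$ is $c_i(S)=\sum_{e\in s_i}n_e(S)$ and the social cost is $C(S)=\sum_i c_i(S)=\sum_{e\in E}n_e(S)^2$. Fix an optimal profile $S^*=(s_1^*,\dots,s_n^* )$ minimizing $C$ and write $\mathrm{OPT}=C(S^* )$. A best response of player $i$ in $S$ is a strategy $s_i^b\in\Sigma_i$ minimizing $c_i(S_{-i},\cdot)$ over $\Sigma_i$ (where $(S_{-i},s_i')$ replaces $s_i$ by $s_i'$); if no strategy strictly decreases $i$'s cost, the best response is $s_i$ itself. A $T$-covering is a sequence of profiles $R=(S^0,\dots,S^T)$ together with players $\pi(1),\dots,\pi(T)$ such that for each $1\le t\le T$, $S^t=(S^{t-1}_{-\pi(t)},s')$ where $s'$ is a best response of $\pi(t)$ in $S^{t-1}$, and every player of $N$ occurs at least once among $\pi(1),\dots,\pi(T)$. It is $\beta$-bounded if every player occurs at most $\beta$ times among $\pi(1),\dots,\pi(T)$.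 For each player $i$, $\mathrm{last}_R(i)=\max\{t:\pi(t)=i\}$. Define $\rho(R)=\sum_{i=1}^n\sum_{e\in s_i^*}\bigl(n_e(S^{\mathrm{last}_R(i)-1})+1\bigr)$, where $S^t$ are the states of $R$. *)

theory Defs
  imports Complex_Main
begin

text \<open>Congestion games with linear delays f(x) = x. A profile is a
  function from players to sets of resources (only its values on N matter).\<close>

definition load :: "'p set \<Rightarrow> ('p \<Rightarrow> 'e set) \<Rightarrow> 'e \<Rightarrow> nat" where
  "load N S e = card {i \<in> N. e \<in> S i}"

definition pcost :: "'p set \<Rightarrow> ('p \<Rightarrow> 'e set) \<Rightarrow> 'p \<Rightarrow> nat" where
  "pcost N S i = (\<Sum>e\<in>S i. load N S e)"

definition social_cost :: "'p set \<Rightarrow> ('p \<Rightarrow> 'e set) \<Rightarrow> nat" where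
  "social_cost N S = (\<Sum>i\<in>N. pcost N S i)"

definition congestion_game :: "'p set \<Rightarrow> 'e set \<Rightarrow> ('p \<Rightarrow> 'e set set) \<Rightarrow> bool" where
  "congestion_game N E Sig \<longleftrightarrow> finite N \<and> finite E \<and>
     (\<forall>i\<in>N. Sig i \<subseteq> Pow E \<and> Sig i \<noteq> {})"

definition valid_profile :: "'p set \<Rightarrow> ('p \<Rightarrow> 'e set set) \<Rightarrow> ('p \<Rightarrow> 'e set) \<Rightarrow> bool" where
  "valid_profile N Sig S \<longleftrightarrow> (\<forall>i\<in>N. S i \<in> Sig i)"

definition optimal_profile :: "'p set \<Rightarrow> ('p \<Rightarrow> 'e set set) \<Rightarrow> ('p \<Rightarrow> 'e set) \<Rightarrow> bool" where
  "optimal_profile N Sig Sopt \<longleftrightarrow> valid_profile N Sig Sopt \<and>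
     (\<forall>S. valid_profile N Sig S \<longrightarrow> social_cost N Sopt \<le> social_cost N S)"

definition is_best_response ::
  "'p set \<Rightarrow> ('p \<Rightarrow> 'e set set) \<Rightarrow> ('p \<Rightarrow> 'e set) \<Rightarrow> 'p \<Rightarrow> 'e set \<Rightarrow> bool" where
  "is_best_response N Sig S i s \<longleftrightarrow> s \<in> Sig i \<and>
     (if (\<exists>s'\<in>Sig i. pcost N (S(i := s')) i < pcost N S i)
      then (\<forall>s'\<in>Sig i. pcost N (S(i := s)) i \<le> pcost N (S(i := s')) i)
      else s = S i)"

text \<open>A T-covering: states St 0, ..., St T and moving players mv 1, ..., mv T.\<close>
definition is_covering ::
  "'p set \<Rightarrow> ('p \<Rightarrow> 'e set set) \<Rightarrow> nat \<Rightarrow> (nat \<Rightarrow> 'p \<Rightarrow> 'e set) \<Rightarrow> (nat \<Rightarrow> 'p) \<Rightarrow> bool" where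
  "is_covering N Sig T St mv \<longleftrightarrow> valid_profile N Sig (St 0) \<and>
     (\<forall>t\<in>{1..T}. mv t \<in> N \<and>
        (\<exists>s. is_best_response N Sig (St (t - 1)) (mv t) s \<and> St t = (St (t - 1))(mv t := s))) \<and>
     (\<forall>i\<in>N. \<exists>t\<in>{1..T}. mv t = i)"

definition bounded_covering :: "'p set \<Rightarrow> nat \<Rightarrow> nat \<Rightarrow> (nat \<Rightarrow> 'p) \<Rightarrow> bool" where
  "bounded_covering N beta T mv \<longleftrightarrow> (\<forall>i\<in>N. card {t\<in>{1..T}. mv t = i} \<le> beta)"

definition last_move :: "nat \<Rightarrow> (nat \<Rightarrow> 'p) \<Rightarrow> 'p \<Rightarrow> nat" where
  "last_move T mv i = Max {t\<in>{1..T}. mv t = i}"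

definition rho ::
  "'p set \<Rightarrow> ('p \<Rightarrow> 'e set) \<Rightarrow> nat \<Rightarrow> (nat \<Rightarrow> 'p \<Rightarrow> 'e set) \<Rightarrow> (nat \<Rightarrow> 'p) \<Rightarrow> nat" where
  "rho N Sopt T St mv = (\<Sum>i\<in>N. \<Sum>e\<in>Sopt i. load N (St (last_move T mv i - 1)) e + 1)"

end

theory Submission
  imports Defs "HOL-Analysis.Convex"
begin

lemma card_as_sum: "finite N \<Longrightarrow> card {j\<in>N. P j} = (\<Sum>j\<in>N. if P j then 1 else 0)"
  by (simp add: sum.If_cases Int_def)

lemma sum_subset_E:
  assumes "finite E" "A \<subseteq> E"
  shows "(\<Sum>e\<in>A. f e) = (\<Sum>e\<in>E. if e \<in> A then f e else 0)"
  using assms by (simp add: sum.If_cases Int_absorb1)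

lemma L1:
  fixes f :: "'e \<Rightarrow> 'a::comm_semiring_1"
  assumes N: "finite N" and E: "finite E" and sub: "\<forall>i\<in>N. S i \<subseteq> E"
  shows "(\<Sum>i\<in>N. \<Sum>e\<in>S i. f e) = (\<Sum>e\<in>E. of_nat (load N S e) * f e)"
proof -
  have "(\<Sum>i\<in>N. \<Sum>e\<in>S i. f e) = (\<Sum>i\<in>N. \<Sum>e\<in>E. if e \<in> S i then f e else 0)"
    using sub E by (intro sum.cong refl sum_subset_E) auto
  also have "\<dots> = (\<Sum>e\<in>E. \<Sum>i\<in>N. if e \<in> S i then f e else 0)"
    by (rule sum.swap)
  also have "\<dots> = (\<Sum>e\<in>E. of_nat (load N S e) * f e)"
  proof (rule sum.cong[OF refl])
    fix e
    have "(\<Sum>i\<in>N. if e \<in> S i then f e else 0) = (\<Sum>i\<in>{i\<in>N. e \<in> S i}. f e)"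
      using N by (simp add: sum.If_cases Int_def)
    also have "\<dots> = of_nat (load N S e) * f e" by (simp add: load_def)
    finally show "(\<Sum>i\<in>N. if e \<in> S i then f e else 0) = of_nat (load N S e) * f e" .
  qed
  finally show ?thesis .
qed

lemma swapL:
  assumes N: "finite N" and E: "finite E" and A: "\<forall>i\<in>N. A i \<subseteq> E" and B: "\<forall>i\<in>N. B i \<subseteq> E"
  shows "(\<Sum>i\<in>N. \<Sum>e\<in>A i. card {j\<in>N. P i j \<and> e \<in> B j})
       = (\<Sum>j\<in>N. \<Sum>e\<in>B j. card {i\<in>N. P i j \<and> e \<in> A i})"
proof -
  have "(\<Sum>i\<in>N. \<Sum>e\<in>A i. card {j\<in>N. P i j \<and> e \<in> B j})
      = (\<Sum>i\<in>N. \<Sum>e\<in>E. \<Sum>j\<in>N. if e \<in> A i \<and> P i j \<and> e \<in> B j then 1 else (0::nat))"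
    apply (rule sum.cong[OF refl])
    apply (subst sum_subset_E[OF E]) using A apply blast
    apply (rule sum.cong[OF refl])
    using N by (auto simp: card_as_sum intro!: sum.cong)
  also have "\<dots> = (\<Sum>j\<in>N. \<Sum>e\<in>E. \<Sum>i\<in>N. if e \<in> A i \<and> P i j \<and> e \<in> B j then 1 else (0::nat))"
  proof -
    let ?F = "\<lambda>i e j. if e \<in> A i \<and> P i j \<and> e \<in> B j then 1 else (0::nat)"
    have "(\<Sum>i\<in>N. \<Sum>e\<in>E. \<Sum>j\<in>N. ?F i e j) = (\<Sum>i\<in>N. \<Sum>j\<in>N. \<Sum>e\<in>E. ?F i e j)"
      by (rule sum.cong[OF refl]) (rule sum.swap)
    also have "\<dots> = (\<Sum>j\<in>N. \<Sum>i\<in>N. \<Sum>e\<in>E. ?F i e j)" by (rule sum.swap)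
    also have "\<dots> = (\<Sum>j\<in>N. \<Sum>e\<in>E. \<Sum>i\<in>N. ?F i e j)"
      by (rule sum.cong[OF refl]) (rule sum.swap)
    finally show ?thesis .
  qed
  also have "\<dots> = (\<Sum>j\<in>N. \<Sum>e\<in>B j. card {i\<in>N. P i j \<and> e \<in> A i})"
    apply (rule sum.cong[OF refl])
    apply (subst sum_subset_E[OF E, of "B _"]) using B apply blast
    apply (rule sum.cong[OF refl])
    using N by (auto simp: card_as_sum intro!: sum.cong)
  finally show ?thesis .
qed

lemma cov_step:
  assumes "is_covering N Sig T St mv" "t \<in> {1..T}"
  shows "mv t \<in> N \<and> (\<exists>s. is_best_response N Sig (St (t-1)) (mv t) s \<and> St t = (St (t-1))(mv t := s))"
  using assms unfolding is_covering_def by blast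

lemma nomove:
  assumes cov: "is_covering N Sig T St mv"
  shows "b \<le> T \<Longrightarrow> a \<le> b \<Longrightarrow> (\<forall>\<tau>. a < \<tau> \<and> \<tau> \<le> b \<longrightarrow> mv \<tau> \<noteq> j) \<Longrightarrow> St b j = St a j"
proof (induction b)
  case 0 then show ?case by simp
next
  case (Suc b)
  show ?case
  proof (cases "a = Suc b")
    case True then show ?thesis by simp
  next
    case False
    then have ab: "a \<le> b" using Suc.prems by simp
    have "Suc b \<in> {1..T}" using Suc.prems by simp
    from cov_step[OF cov this] obtain s where st: "St (Suc b) = (St b)(mv (Suc b) := s)" by auto
    have "mv (Suc b) \<noteq> j" using Suc.prems ab by auto
    then have "St (Suc b) j = St b j" using st by simp
    also have "\<dots> = St a j" using Suc.IH Suc.prems ab by auto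
    finally show ?thesis .
  qed
qed

lemma br_valid: "is_best_response N Sig S i s \<Longrightarrow> s \<in> Sig i"
  unfolding is_best_response_def by blast

lemma valid_states:
  assumes cov: "is_covering N Sig T St mv"
  shows "t \<le> T \<Longrightarrow> valid_profile N Sig (St t)"
proof (induction t)
  case 0 then show ?case using cov unfolding is_covering_def by blast
next
  case (Suc t)
  have "Suc t \<in> {1..T}" using Suc.prems by simp
  from cov_step[OF cov this] obtain s where st: "St (Suc t) = (St t)(mv (Suc t) := s)"
    and br: "is_best_response N Sig (St t) (mv (Suc t)) s" by auto
  show ?case using Suc br_valid[OF br] st unfolding valid_profile_def by auto
qed

lemma lastm:
  assumes cov: "is_covering N Sig T St mv" and i: "i \<in> N"
  shows "last_move T mv i \<in> {1..T} \<and> mv (last_move T mv i) = i \<and>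
         (\<forall>\<tau>. last_move T mv i < \<tau> \<and> \<tau> \<le> T \<longrightarrow> mv \<tau> \<noteq> i)"
proof -
  let ?A = "{t\<in>{1..T}. mv t = i}"
  have ne: "?A \<noteq> {}" using cov i unfolding is_covering_def by blast
  have fin: "finite ?A" by simp
  have mA: "Max ?A \<in> ?A" using Max_in[OF fin ne] .
  have lm: "last_move T mv i = Max ?A" unfolding last_move_def ..
  have a1: "Max ?A \<in> {1..T}" and a2: "mv (Max ?A) = i" using mA by auto
  have b: "\<forall>\<tau>. Max ?A < \<tau> \<and> \<tau> \<le> T \<longrightarrow> mv \<tau> \<noteq> i"
  proof (intro allI impI)
    fix \<tau> assume h: "Max ?A < \<tau> \<and> \<tau> \<le> T"
    show "mv \<tau> \<noteq> i"
    proof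
      assume "mv \<tau> = i"
      moreover have "1 \<le> \<tau>" using h mA by auto
      ultimately have "\<tau> \<in> ?A" using h by auto
      then have "\<tau> \<le> Max ?A" using Max_ge[OF fin] by blast
      then show False using h by simp
    qed
  qed
  show ?thesis unfolding lm using a1 a2 b by blast
qed

lemma load_upd: "finite N \<Longrightarrow> load N (S(i:=x)) e \<le> load N S e + 1"
proof -
  assume N: "finite N"
  have "{j\<in>N. e \<in> (S(i:=x)) j} \<subseteq> insert i {j\<in>N. e \<in> S j}" by auto
  then have "card {j\<in>N. e \<in> (S(i:=x)) j} \<le> card (insert i {j\<in>N. e \<in> S j})"
    by (intro card_mono) (use N in auto)
  also have "\<dots> \<le> card {j\<in>N. e \<in> S j} + 1" using N by (simp add: card_insert_if)
  finally show ?thesis unfolding load_def .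
qed

lemma br_bound:
  assumes N: "finite N" and x: "x \<in> Sig i" and br: "is_best_response N Sig S i s"
  shows "pcost N (S(i:=s)) i \<le> (\<Sum>e\<in>x. load N S e + 1)"
proof -
  have "pcost N (S(i:=s)) i \<le> pcost N (S(i:=x)) i"
  proof (cases "\<exists>s'\<in>Sig i. pcost N (S(i := s')) i < pcost N S i")
    case True
    have bri: "if \<exists>s'\<in>Sig i. pcost N (S(i := s')) i < pcost N S i
      then (\<forall>s'\<in>Sig i. pcost N (S(i := s)) i \<le> pcost N (S(i := s')) i)
      else s = S i" using br unfolding is_best_response_def by (rule conjunct2)
    have "\<forall>s'\<in>Sig i. pcost N (S(i:=s)) i \<le> pcost N (S(i:=s')) i"
      using bri[unfolded if_P[OF True]] .
    then show ?thesis using x by blast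
  next
    case False
    have bri: "if \<exists>s'\<in>Sig i. pcost N (S(i := s')) i < pcost N S i
      then (\<forall>s'\<in>Sig i. pcost N (S(i := s)) i \<le> pcost N (S(i := s')) i)
      else s = S i" using br unfolding is_best_response_def by (rule conjunct2)
    have "s = S i" using bri[unfolded if_not_P[OF False]] .
    moreover have "\<not> pcost N (S(i := x)) i < pcost N S i" using False x by blast
    ultimately show ?thesis by simp
  qed
  also have "\<dots> = (\<Sum>e\<in>x. load N (S(i:=x)) e)" unfolding pcost_def by simp
  also have "\<dots> \<le> (\<Sum>e\<in>x. load N S e + 1)" by (intro sum_mono load_upd N)
  finally show ?thesis .
qed

lemma br_cov:
  assumes cov: "is_covering N Sig T St mv" and N: "finite N" and opt: "valid_profile N Sig Sopt"
    and t: "t \<in> {1..T}"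
  shows "pcost N (St t) (mv t) \<le> (\<Sum>e\<in>Sopt (mv t). load N (St (t-1)) e + 1)"
proof -
  from cov_step[OF cov t] obtain s where mvN: "mv t \<in> N" and st: "St t = (St (t-1))(mv t := s)"
    and br: "is_best_response N Sig (St (t-1)) (mv t) s" by auto
  have "Sopt (mv t) \<in> Sig (mv t)" using opt mvN unfolding valid_profile_def by blast
  from br_bound[OF N this br] show ?thesis using st by simp
qed

lemma game_facts:
  assumes "congestion_game N E Sig"
  shows "finite N" "finite E" "\<And>i. i \<in> N \<Longrightarrow> Sig i \<subseteq> Pow E"
  using assms unfolding congestion_game_def by auto

lemma valid_sub:
  assumes "congestion_game N E Sig" "valid_profile N Sig S"
  shows "\<forall>i\<in>N. S i \<subseteq> E"
  using assms unfolding congestion_game_def valid_profile_def by blast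

lemma cost_prev:
  assumes game: "congestion_game N E Sig" and opt: "valid_profile N Sig Sopt"
    and covb: "is_covering N Sig T Stb mvb"
  shows "social_cost N (Stb T) \<le> 2 * rho N Sopt T Stb mvb"
proof -
  note gf = game_facts[OF game]
  define lt where "lt = last_move T mvb"
  have L: "\<And>i. i \<in> N \<Longrightarrow> lt i \<in> {1..T} \<and> mvb (lt i) = i \<and> (\<forall>\<tau>. lt i < \<tau> \<and> \<tau> \<le> T \<longrightarrow> mvb \<tau> \<noteq> i)"
    unfolding lt_def using lastm[OF covb] by blast
  have fin: "\<And>i j. i \<in> N \<Longrightarrow> j \<in> N \<Longrightarrow> lt j \<le> lt i \<Longrightarrow> Stb (lt i) j = Stb T j"
  proof -
    fix i j assume i: "i \<in> N" and j: "j \<in> N" and le: "lt j \<le> lt i"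
    show "Stb (lt i) j = Stb T j"
      by (rule sym, rule nomove[OF covb]) (use L[OF i] L[OF j] le in auto)
  qed
  have subT: "\<forall>i\<in>N. Stb T i \<subseteq> E" using valid_sub[OF game valid_states[OF covb order_refl]] .
  have step1: "\<And>i. i \<in> N \<Longrightarrow> pcost N (Stb T) i \<le> pcost N (Stb (lt i)) i +
      (\<Sum>e\<in>Stb T i. card {j\<in>N. lt i < lt j \<and> e \<in> Stb T j})"
  proof -
    fix i assume i: "i \<in> N"
    have "pcost N (Stb T) i = (\<Sum>e\<in>Stb T i. load N (Stb T) e)" unfolding pcost_def ..
    also have "\<dots> \<le> (\<Sum>e\<in>Stb T i. load N (Stb (lt i)) e + card {j\<in>N. lt i < lt j \<and> e \<in> Stb T j})"
    proof (rule sum_mono)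
      fix e
      have "{j\<in>N. e \<in> Stb T j} \<subseteq> {j\<in>N. e \<in> Stb (lt i) j} \<union> {j\<in>N. lt i < lt j \<and> e \<in> Stb T j}"
      proof
        fix j assume jj: "j \<in> {j\<in>N. e \<in> Stb T j}"
        show "j \<in> {j\<in>N. e \<in> Stb (lt i) j} \<union> {j\<in>N. lt i < lt j \<and> e \<in> Stb T j}"
        proof (cases "lt j \<le> lt i")
          case True then show ?thesis using fin[OF i, of j] jj by simp
        next
          case False then show ?thesis using jj by simp
        qed
      qed
      then have "card {j\<in>N. e \<in> Stb T j} \<le> card ({j\<in>N. e \<in> Stb (lt i) j} \<union> {j\<in>N. lt i < lt j \<and> e \<in> Stb T j})"
        by (intro card_mono) (use gf in auto)
      also have "\<dots> \<le> card {j\<in>N. e \<in> Stb (lt i) j} + card {j\<in>N. lt i < lt j \<and> e \<in> Stb T j}"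
        by (rule card_Un_le)
      finally show "load N (Stb T) e \<le> load N (Stb (lt i)) e + card {j\<in>N. lt i < lt j \<and> e \<in> Stb T j}"
        unfolding load_def .
    qed
    also have "\<dots> = pcost N (Stb (lt i)) i + (\<Sum>e\<in>Stb T i. card {j\<in>N. lt i < lt j \<and> e \<in> Stb T j})"
      unfolding pcost_def using fin[OF i i] by (simp add: sum.distrib)
    finally show "pcost N (Stb T) i \<le> pcost N (Stb (lt i)) i +
      (\<Sum>e\<in>Stb T i. card {j\<in>N. lt i < lt j \<and> e \<in> Stb T j})" .
  qed
  have step3: "\<And>j. j \<in> N \<Longrightarrow> (\<Sum>e\<in>Stb T j. card {i\<in>N. lt i < lt j \<and> e \<in> Stb T i}) \<le> pcost N (Stb (lt j)) j"
  proof -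
    fix j assume j: "j \<in> N"
    have "(\<Sum>e\<in>Stb T j. card {i\<in>N. lt i < lt j \<and> e \<in> Stb T i}) \<le> (\<Sum>e\<in>Stb T j. load N (Stb (lt j)) e)"
    proof (rule sum_mono)
      fix e
      have "{i\<in>N. lt i < lt j \<and> e \<in> Stb T i} \<subseteq> {i\<in>N. e \<in> Stb (lt j) i}"
        using fin[OF j] by auto
      then show "card {i\<in>N. lt i < lt j \<and> e \<in> Stb T i} \<le> load N (Stb (lt j)) e"
        unfolding load_def by (intro card_mono) (use gf in auto)
    qed
    also have "\<dots> = pcost N (Stb (lt j)) j" unfolding pcost_def using fin[OF j j] by simp
    finally show "(\<Sum>e\<in>Stb T j. card {i\<in>N. lt i < lt j \<and> e \<in> Stb T i}) \<le> pcost N (Stb (lt j)) j" .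
  qed
  have step5: "\<And>j. j \<in> N \<Longrightarrow> pcost N (Stb (lt j)) j \<le> (\<Sum>e\<in>Sopt j. load N (Stb (lt j - 1)) e + 1)"
  proof -
    fix j assume j: "j \<in> N"
    show "pcost N (Stb (lt j)) j \<le> (\<Sum>e\<in>Sopt j. load N (Stb (lt j - 1)) e + 1)"
      using br_cov[OF covb gf(1) opt, of "lt j"] L[OF j] by simp
  qed
  have "social_cost N (Stb T) \<le> (\<Sum>i\<in>N. pcost N (Stb (lt i)) i +
      (\<Sum>e\<in>Stb T i. card {j\<in>N. lt i < lt j \<and> e \<in> Stb T j}))"
    unfolding social_cost_def by (rule sum_mono) (rule step1)
  also have "\<dots> = (\<Sum>i\<in>N. pcost N (Stb (lt i)) i) +
      (\<Sum>j\<in>N. \<Sum>e\<in>Stb T j. card {i\<in>N. lt i < lt j \<and> e \<in> Stb T i})"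
    using swapL[OF gf(1,2) subT subT, of "\<lambda>i j. lt i < lt j"] by (simp add: sum.distrib)
  also have "\<dots> \<le> (\<Sum>i\<in>N. pcost N (Stb (lt i)) i) + (\<Sum>j\<in>N. pcost N (Stb (lt j)) j)"
    by (intro add_left_mono sum_mono step3)
  also have "\<dots> \<le> 2 * (\<Sum>j\<in>N. \<Sum>e\<in>Sopt j. load N (Stb (lt j - 1)) e + 1)"
    using sum_mono[of N "\<lambda>j. pcost N (Stb (lt j)) j", OF step5] by simp
  also have "\<dots> = 2 * rho N Sopt T Stb mvb" unfolding rho_def lt_def ..
  finally show ?thesis .
qed

lemma lastb:
  fixes mv :: "nat \<Rightarrow> 'p" and b :: nat
  assumes "\<exists>\<tau>\<in>{1..b}. mv \<tau> = j"
  shows "Max {\<tau>\<in>{1..b}. mv \<tau> = j} \<in> {1..b} \<and> mv (Max {\<tau>\<in>{1..b}. mv \<tau> = j}) = j \<and>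
         (\<forall>\<tau>. Max {\<tau>\<in>{1..b}. mv \<tau> = j} < \<tau> \<and> \<tau> \<le> b \<longrightarrow> mv \<tau> \<noteq> j)"
proof -
  let ?A = "{t\<in>{1..b}. mv t = j}"
  have ne: "?A \<noteq> {}" using assms by blast
  have fin: "finite ?A" by (rule finite_subset[of _ "{1..b}"]) auto
  have mA: "Max ?A \<in> ?A" using Max_in[OF fin ne] .
  have a1: "Max ?A \<in> {1..b}" and a2: "mv (Max ?A) = j" using mA by auto
  have b: "\<forall>\<tau>. Max ?A < \<tau> \<and> \<tau> \<le> b \<longrightarrow> mv \<tau> \<noteq> j"
  proof (intro allI impI)
    fix \<tau> assume h: "Max ?A < \<tau> \<and> \<tau> \<le> b"
    show "mv \<tau> \<noteq> j"
    proof
      assume "mv \<tau> = j"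
      moreover have "1 \<le> \<tau>" using h mA by auto
      ultimately have "\<tau> \<in> ?A" using h by auto
      then have "\<tau> \<le> Max ?A" using Max_ge[OF fin] by blast
      then show False using h by simp
    qed
  qed
  show ?thesis using a1 a2 b by blast
qed

definition gcnt :: "'p set \<Rightarrow> (nat \<Rightarrow> 'p \<Rightarrow> 'e set) \<Rightarrow> (nat \<Rightarrow> 'p) \<Rightarrow> 'e \<Rightarrow> nat \<Rightarrow> nat" where
  "gcnt N St mv e t = card {j\<in>N. (\<exists>\<tau>\<in>{1..t}. mv \<tau> = j) \<and> e \<in> St t j}"

definition Gmax :: "'p set \<Rightarrow> (nat \<Rightarrow> 'p \<Rightarrow> 'e set) \<Rightarrow> (nat \<Rightarrow> 'p) \<Rightarrow> nat \<Rightarrow> 'e \<Rightarrow> nat" where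
  "Gmax N St mv T e = Max (gcnt N St mv e ` {0..T})"

lemma load_le_G:
  assumes cov: "is_covering N Sig T St mv" and N: "finite N" and t: "t \<le> T"
  shows "load N (St t) e \<le> load N (St 0) e + Gmax N St mv T e"
proof -
  have "{j\<in>N. e \<in> St t j} \<subseteq> {j\<in>N. e \<in> St 0 j} \<union> {j\<in>N. (\<exists>\<tau>\<in>{1..t}. mv \<tau> = j) \<and> e \<in> St t j}"
  proof
    fix j assume jj: "j \<in> {j\<in>N. e \<in> St t j}"
    show "j \<in> {j\<in>N. e \<in> St 0 j} \<union> {j\<in>N. (\<exists>\<tau>\<in>{1..t}. mv \<tau> = j) \<and> e \<in> St t j}"
    proof (cases "\<exists>\<tau>\<in>{1..t}. mv \<tau> = j")
      case True then show ?thesis using jj by simp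
    next
      case False
      then have "St t j = St 0 j" by (intro nomove[OF cov t]) auto
      then show ?thesis using jj by simp
    qed
  qed
  then have "load N (St t) e \<le> card ({j\<in>N. e \<in> St 0 j} \<union> {j\<in>N. (\<exists>\<tau>\<in>{1..t}. mv \<tau> = j) \<and> e \<in> St t j})"
    unfolding load_def by (intro card_mono) (use N in auto)
  also have "\<dots> \<le> load N (St 0) e + gcnt N St mv e t"
    unfolding load_def gcnt_def by (rule card_Un_le)
  also have "gcnt N St mv e t \<le> Gmax N St mv T e"
    unfolding Gmax_def by (rule Max_ge) (use t in auto)
  finally show ?thesis by simp
qed

lemma dbl:
  fixes f :: "'p \<Rightarrow> nat"
  assumes H: "finite H"
  shows "(card H)^2 \<le> 2 * (\<Sum>j\<in>H. card {q\<in>H. f q \<le> f j})"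
proof -
  have c: "\<And>j. card {q\<in>H. f q \<le> f j} = (\<Sum>q\<in>H. if f q \<le> f j then 1 else 0)"
    using H by (rule card_as_sum)
  have "(card H)^2 = (\<Sum>j\<in>H. \<Sum>q\<in>H. (1::nat))" by (simp add: power2_eq_square)
  also have "\<dots> \<le> (\<Sum>j\<in>H. \<Sum>q\<in>H. (if f q \<le> f j then 1 else 0) + (if f j \<le> f q then 1 else 0))"
    by (intro sum_mono) auto
  also have "\<dots> = (\<Sum>j\<in>H. \<Sum>q\<in>H. if f q \<le> f j then 1 else 0) + (\<Sum>j\<in>H. \<Sum>q\<in>H. if f j \<le> f q then 1 else 0)"
    by (simp add: sum.distrib)
  also have "(\<Sum>j\<in>H. \<Sum>q\<in>H. if f j \<le> f q then 1 else (0::nat)) = (\<Sum>q\<in>H. \<Sum>j\<in>H. if f j \<le> f q then 1 else 0)"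
    by (rule sum.swap)
  finally show ?thesis by (simp add: c)
qed

lemma regroup:
  fixes h :: "'p \<Rightarrow> nat"
  assumes N: "finite N" and mvN: "\<forall>\<tau>\<in>{1..T}. mv \<tau> \<in> N" and bnd: "bounded_covering N beta T mv"
  shows "(\<Sum>\<tau>\<in>{1..T}. h (mv \<tau>)) \<le> beta * (\<Sum>j\<in>N. h j)"
proof -
  have "(\<Sum>\<tau>\<in>{1..T}. h (mv \<tau>)) = (\<Sum>\<tau>\<in>{1..T}. \<Sum>j\<in>N. if mv \<tau> = j then h j else 0)"
    using mvN N by (intro sum.cong refl) (simp add: sum.delta)
  also have "\<dots> = (\<Sum>j\<in>N. \<Sum>\<tau>\<in>{1..T}. if mv \<tau> = j then h j else 0)" by (rule sum.swap)
  also have "\<dots> = (\<Sum>j\<in>N. card {\<tau>\<in>{1..T}. mv \<tau> = j} * h j)"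
    by (intro sum.cong refl) (simp add: sum.If_cases Int_def)
  also have "\<dots> \<le> (\<Sum>j\<in>N. beta * h j)"
    using bnd unfolding bounded_covering_def by (intro sum_mono mult_right_mono) auto
  finally show ?thesis by (simp add: sum_distrib_left)
qed

lemma Gsq:
  assumes cov: "is_covering N Sig T St mv" and N: "finite N"
  shows "(Gmax N St mv T e)^2 \<le> 2 * (\<Sum>\<tau>\<in>{1..T}. if e \<in> St \<tau> (mv \<tau>) then load N (St \<tau>) e else 0)"
proof -
  have "Gmax N St mv T e \<in> gcnt N St mv e ` {0..T}"
    unfolding Gmax_def by (rule Max_in) auto
  then obtain ts where ts: "ts \<le> T" and gts: "gcnt N St mv e ts = Gmax N St mv T e" by auto
  define H where "H = {j\<in>N. (\<exists>\<tau>\<in>{1..ts}. mv \<tau> = j) \<and> e \<in> St ts j}"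
  define tau where "tau j = Max {\<tau>\<in>{1..ts}. mv \<tau> = j}" for j
  have finH: "finite H" unfolding H_def using N by simp
  have P: "\<And>j. j \<in> H \<Longrightarrow> tau j \<in> {1..ts} \<and> mv (tau j) = j \<and> (\<forall>\<tau>. tau j < \<tau> \<and> \<tau> \<le> ts \<longrightarrow> mv \<tau> \<noteq> j)"
    unfolding tau_def by (rule lastb) (simp add: H_def)
  have hold: "\<And>j q. j \<in> H \<Longrightarrow> q \<in> H \<Longrightarrow> tau q \<le> tau j \<Longrightarrow> e \<in> St (tau j) q"
  proof -
    fix j q assume j: "j \<in> H" and q: "q \<in> H" and le: "tau q \<le> tau j"
    have "St ts q = St (tau j) q"
      using P[OF j] P[OF q] le ts by (intro nomove[OF cov]) auto
    moreover have "e \<in> St ts q" using q unfolding H_def by simp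
    ultimately show "e \<in> St (tau j) q" by simp
  qed
  have cardle: "\<And>j. j \<in> H \<Longrightarrow> card {q\<in>H. tau q \<le> tau j} \<le> load N (St (tau j)) e"
  proof -
    fix j assume j: "j \<in> H"
    have "{q\<in>H. tau q \<le> tau j} \<subseteq> {q\<in>N. e \<in> St (tau j) q}"
      using hold[OF j] unfolding H_def by auto
    then show "card {q\<in>H. tau q \<le> tau j} \<le> load N (St (tau j)) e"
      unfolding load_def by (intro card_mono) (use N in auto)
  qed
  have inj: "inj_on tau H"
  proof (rule inj_onI)
    fix j q assume "j \<in> H" "q \<in> H" "tau j = tau q"
    then show "j = q" using P by metis
  qed
  have sub: "tau ` H \<subseteq> {\<tau>\<in>{1..T}. e \<in> St \<tau> (mv \<tau>)}"
  proof
    fix x assume "x \<in> tau ` H"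
    then obtain j where j: "j \<in> H" and x: "x = tau j" by auto
    have "e \<in> St (tau j) j" using hold[OF j j] by simp
    then show "x \<in> {\<tau>\<in>{1..T}. e \<in> St \<tau> (mv \<tau>)}" using P[OF j] x ts by auto
  qed
  have "(Gmax N St mv T e)^2 = (card H)^2" using gts unfolding gcnt_def H_def by simp
  also have "\<dots> \<le> 2 * (\<Sum>j\<in>H. card {q\<in>H. tau q \<le> tau j})" by (rule dbl[OF finH])
  also have "\<dots> \<le> 2 * (\<Sum>j\<in>H. load N (St (tau j)) e)" by (intro mult_left_mono sum_mono cardle) auto
  also have "(\<Sum>j\<in>H. load N (St (tau j)) e) = (\<Sum>\<tau>\<in>tau ` H. load N (St \<tau>) e)"
    by (simp add: sum.reindex[OF inj])
  also have "\<dots> \<le> (\<Sum>\<tau>\<in>{\<tau>\<in>{1..T}. e \<in> St \<tau> (mv \<tau>)}. load N (St \<tau>) e)"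
    by (rule sum_mono2[OF _ sub]) auto
  also have "\<dots> = (\<Sum>\<tau>\<in>{1..T}. if e \<in> St \<tau> (mv \<tau>) then load N (St \<tau>) e else 0)"
    by (rule sum.inter_filter) simp
  finally show ?thesis by simp
qed

lemma cost_cong:
  assumes "\<forall>i\<in>N. S i = S' i"
  shows "social_cost N S = social_cost N S'"
proof -
  have l: "\<And>e. load N S e = load N S' e"
    unfolding load_def using assms by (metis (mono_tags, lifting) Collect_cong)
  have "\<And>i. i \<in> N \<Longrightarrow> pcost N S i = pcost N S' i"
    unfolding pcost_def l using assms by simp
  then show ?thesis unfolding social_cost_def by (rule sum.cong[OF refl])
qed

lemma alg:
  fixes rho rhob p q A Op C X2 beta :: real
  assumes Op: "Op > 0" and beta: "beta \<ge> 1"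
    and p0: "p \<ge> 0" and q0: "q \<ge> 0" and A0: "A \<ge> 0"
    and r: "rho \<le> p + q + A" and X: "X2 \<le> 2 * beta * (p + q + A)"
    and C: "C \<le> 2 * rhob" and AO: "A \<le> Op"
    and cs1: "p^2 \<le> Op * C" and cs2: "q^2 \<le> Op * X2"
  shows "rho / Op \<le> 2 * sqrt (2 * (rhob / Op)) + 4 * beta + 1"
proof -
  define w where "w = sqrt (2 * rhob * Op)"
  have "0 \<le> Op * C" using cs1 by (meson order_trans zero_le_power2)
  then have C0: "C \<ge> 0" using Op by (simp add: zero_le_mult_iff)
  have rb: "2 * rhob * Op \<ge> 0" using C C0 Op by simp
  have w0: "w \<ge> 0" unfolding w_def using rb by simp
  have ww: "w^2 = 2 * rhob * Op" unfolding w_def using rb by simp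
  have "Op * C \<le> Op * (2 * rhob)" using C Op by (intro mult_left_mono) auto
  then have "p^2 \<le> w^2" using cs1 ww by (simp add: algebra_simps)
  then have pw: "p \<le> w" using p0 w0 power2_le_imp_le by blast
  have q2: "q^2 \<le> 2 * beta * Op * (w + q + Op)"
  proof -
    have "q^2 \<le> Op * (2 * beta * (p + q + A))" using cs2 X Op
      by (meson order_trans less_imp_le mult_left_mono)
    also have "\<dots> \<le> Op * (2 * beta * (w + q + Op))"
      using pw AO Op beta by (intro mult_left_mono) auto
    finally show ?thesis by (simp add: algebra_simps)
  qed
  have qw: "q \<le> w + 4 * beta * Op"
  proof (rule ccontr)
    assume "\<not> ?thesis"
    then have h: "q > w + 4 * beta * Op" by simp
    have "q * (q - 2 * beta * Op) > (w + 4 * beta * Op) * (w + 2 * beta * Op)"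
    proof (rule mult_strict_mono')
      show "w + 4 * beta * Op < q" using h by linarith
      show "w + 2 * beta * Op < q - 2 * beta * Op" using h by linarith
      show "0 \<le> w + 4 * beta * Op" using w0 Op beta by simp
      show "0 \<le> w + 2 * beta * Op" using w0 Op beta by simp
    qed
    moreover have "(w + 4 * beta * Op) * (w + 2 * beta * Op) \<ge> 2 * beta * Op * w + 2 * beta * Op * Op"
    proof -
      have "beta * beta \<ge> beta" using mult_left_mono[of 1 beta beta] beta by simp
      then have "8 * (beta * beta) * (Op * Op) \<ge> 2 * beta * (Op * Op)" using Op
        by (intro mult_right_mono) (use beta in auto)
      moreover have "6 * beta * Op * w \<ge> 2 * beta * Op * w" using beta Op w0 by simp
      moreover have "(w + 4 * beta * Op) * (w + 2 * beta * Op) = w * w + 6 * beta * Op * w + 8 * (beta * beta) * (Op * Op)"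
        by (simp add: algebra_simps)
      moreover have "w * w \<ge> 0" by simp
      ultimately show ?thesis by linarith
    qed
    ultimately show False using q2 by (simp add: algebra_simps power2_eq_square)
  qed
  have "rho \<le> 2 * w + (4 * beta + 1) * Op" using r pw qw AO by (simp add: algebra_simps)
  then have "rho / Op \<le> (2 * w + (4 * beta + 1) * Op) / Op" using Op by (simp add: divide_right_mono)
  also have "\<dots> = 2 * (w / Op) + 4 * beta + 1" using Op by (simp add: field_simps)
  also have "w / Op = sqrt (2 * (rhob / Op))"
  proof -
    have e1: "2 * rhob * Op = (2 * (rhob / Op)) * Op^2" using Op by (simp add: power2_eq_square field_simps)
    have "w = sqrt (2 * (rhob / Op)) * sqrt (Op^2)" unfolding w_def e1 by (rule real_sqrt_mult)
    also have "sqrt (Op^2) = Op" using Op by simp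
    finally show ?thesis using Op by simp
  qed
  finally show ?thesis .
qed

theorem lemma4:
  fixes N :: "'p set" and E :: "'e set" and Sig :: "'p \<Rightarrow> 'e set set"
    and Sopt :: "'p \<Rightarrow> 'e set" and beta T :: nat
    and Stb St :: "nat \<Rightarrow> 'p \<Rightarrow> 'e set" and mvb mv :: "nat \<Rightarrow> 'p"
  assumes game: "congestion_game N E Sig"
    and opt: "optimal_profile N Sig Sopt"
    and opt_pos: "social_cost N Sopt > 0"
    and beta: "beta \<ge> 1"
    and covb: "is_covering N Sig T Stb mvb" and bndb: "bounded_covering N beta T mvb"
    and cov: "is_covering N Sig T St mv" and bnd: "bounded_covering N beta T mv"
    and consec: "\<forall>i\<in>N. St 0 i = Stb T i"
  shows "real (rho N Sopt T St mv) / real (social_cost N Sopt)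
           \<le> 2 * sqrt (2 * (real (rho N Sopt T Stb mvb) / real (social_cost N Sopt)))
             + 4 * real beta + 1"
proof -
  note gf = game_facts[OF game]
  have optv: "valid_profile N Sig Sopt" using opt unfolding optimal_profile_def by blast
  have subO: "\<forall>i\<in>N. Sopt i \<subseteq> E" using valid_sub[OF game optv] .
  have sub0: "\<forall>i\<in>N. St 0 i \<subseteq> E" using valid_sub[OF game valid_states[OF cov, of 0]] by simp
  have mvN: "\<forall>\<tau>\<in>{1..T}. mv \<tau> \<in> N" using cov_step[OF cov] by blast
  define a where "a e = load N Sopt e" for e
  define b where "b e = load N (St 0) e" for e
  define c where "c e = Gmax N St mv T e" for e
  define K where "K = (\<Sum>e\<in>E. a e * (b e + c e + 1))"
  have hK: "(\<Sum>j\<in>N. \<Sum>e\<in>Sopt j. b e + c e + 1) = K"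
    unfolding K_def a_def using L1[OF gf(1,2) subO, of "\<lambda>e. b e + c e + 1"] by simp
  have r1: "rho N Sopt T St mv \<le> K"
  proof -
    have "rho N Sopt T St mv \<le> (\<Sum>i\<in>N. \<Sum>e\<in>Sopt i. b e + c e + 1)"
      unfolding rho_def
    proof (intro sum_mono)
      fix i e assume i: "i \<in> N"
      have "last_move T mv i \<in> {1..T}" using lastm[OF cov i] by blast
      then have "last_move T mv i - 1 \<le> T" by auto
      from load_le_G[OF cov gf(1) this, of e]
      show "load N (St (last_move T mv i - 1)) e + 1 \<le> b e + c e + 1" unfolding b_def c_def by simp
    qed
    then show ?thesis using hK by simp
  qed
  have r2: "(\<Sum>e\<in>E. (c e)^2) \<le> 2 * beta * K"
  proof -
    have "(\<Sum>e\<in>E. (c e)^2) \<le> (\<Sum>e\<in>E. 2 * (\<Sum>\<tau>\<in>{1..T}. if e \<in> St \<tau> (mv \<tau>) then load N (St \<tau>) e else 0))"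
      unfolding c_def by (intro sum_mono Gsq[OF cov gf(1)])
    also have "\<dots> = 2 * (\<Sum>\<tau>\<in>{1..T}. \<Sum>e\<in>E. if e \<in> St \<tau> (mv \<tau>) then load N (St \<tau>) e else 0)"
      by (simp add: sum_distrib_left[symmetric] sum.swap[of _ E])
    also have "(\<Sum>\<tau>\<in>{1..T}. \<Sum>e\<in>E. if e \<in> St \<tau> (mv \<tau>) then load N (St \<tau>) e else 0)
        = (\<Sum>\<tau>\<in>{1..T}. pcost N (St \<tau>) (mv \<tau>))"
    proof (intro sum.cong refl)
      fix \<tau> assume t: "\<tau> \<in> {1..T}"
      have "St \<tau> (mv \<tau>) \<subseteq> E"
        using valid_sub[OF game valid_states[OF cov, of \<tau>]] mvN t by auto
      then show "(\<Sum>e\<in>E. if e \<in> St \<tau> (mv \<tau>) then load N (St \<tau>) e else 0) = pcost N (St \<tau>) (mv \<tau>)"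
        unfolding pcost_def using sum_subset_E[OF gf(2), of "St \<tau> (mv \<tau>)" "load N (St \<tau>)"] by simp
    qed
    also have "(\<Sum>\<tau>\<in>{1..T}. pcost N (St \<tau>) (mv \<tau>)) \<le> (\<Sum>\<tau>\<in>{1..T}. \<Sum>e\<in>Sopt (mv \<tau>). b e + c e + 1)"
    proof (intro sum_mono)
      fix \<tau> assume t: "\<tau> \<in> {1..T}"
      have "pcost N (St \<tau>) (mv \<tau>) \<le> (\<Sum>e\<in>Sopt (mv \<tau>). load N (St (\<tau>-1)) e + 1)"
        by (rule br_cov[OF cov gf(1) optv t])
      also have "\<dots> \<le> (\<Sum>e\<in>Sopt (mv \<tau>). b e + c e + 1)"
      proof (intro sum_mono)
        fix e
        have "\<tau> - 1 \<le> T" using t by auto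
        from load_le_G[OF cov gf(1) this, of e]
        show "load N (St (\<tau>-1)) e + 1 \<le> b e + c e + 1" unfolding b_def c_def by simp
      qed
      finally show "pcost N (St \<tau>) (mv \<tau>) \<le> (\<Sum>e\<in>Sopt (mv \<tau>). b e + c e + 1)" .
    qed
    also have "\<dots> \<le> beta * (\<Sum>j\<in>N. \<Sum>e\<in>Sopt j. b e + c e + 1)"
      by (rule regroup[OF gf(1) mvN bnd])
    finally show ?thesis using hK by (simp add: mult.assoc)
  qed
  have r3: "social_cost N (St 0) \<le> 2 * rho N Sopt T Stb mvb"
    using cost_prev[OF game optv covb] cost_cong[OF consec] by simp
  have OPTe: "social_cost N Sopt = (\<Sum>e\<in>E. a e * a e)"
    unfolding social_cost_def pcost_def a_def using L1[OF gf(1,2) subO, of "load N Sopt"] by simp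
  have C0e: "social_cost N (St 0) = (\<Sum>e\<in>E. b e * b e)"
    unfolding social_cost_def pcost_def b_def using L1[OF gf(1,2) sub0, of "load N (St 0)"] by simp
  have Ae: "(\<Sum>e\<in>E. a e) \<le> social_cost N Sopt"
    unfolding OPTe by (intro sum_mono) (simp add: le_square)
  have Ke: "K = (\<Sum>e\<in>E. a e * b e) + (\<Sum>e\<in>E. a e * c e) + (\<Sum>e\<in>E. a e)"
    unfolding K_def by (simp add: algebra_simps sum.distrib)
  define p where "p = (\<Sum>e\<in>E. real (a e) * real (b e))"
  define q where "q = (\<Sum>e\<in>E. real (a e) * real (c e))"
  define A where "A = (\<Sum>e\<in>E. real (a e))"
  define Op where "Op = real (social_cost N Sopt)"
  define C where "C = real (social_cost N (St 0))"
  define X2 where "X2 = (\<Sum>e\<in>E. real (c e)^2)"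
  have KR: "real K = p + q + A" unfolding Ke p_def q_def A_def by simp
  have OpR: "Op = (\<Sum>e\<in>E. real (a e)^2)" unfolding Op_def OPTe by (simp add: power2_eq_square)
  have CR: "C = (\<Sum>e\<in>E. real (b e)^2)" unfolding C_def C0e by (simp add: power2_eq_square)
  have cs1: "p^2 \<le> Op * C" unfolding p_def OpR CR by (rule Cauchy_Schwarz_ineq_sum)
  have cs2: "q^2 \<le> Op * X2" unfolding q_def OpR X2_def by (rule Cauchy_Schwarz_ineq_sum)
  have X: "X2 \<le> 2 * real beta * (p + q + A)"
  proof -
    have "X2 = real (\<Sum>e\<in>E. (c e)^2)" unfolding X2_def by simp
    also have "\<dots> \<le> real (2 * beta * K)" using r2 by (simp only: of_nat_le_iff)
    finally show ?thesis using KR by simp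
  qed
  have main: "real (rho N Sopt T St mv) / Op \<le> 2 * sqrt (2 * (real (rho N Sopt T Stb mvb) / Op)) + 4 * real beta + 1"
  proof (rule alg)
    show "Op > 0" unfolding Op_def using opt_pos by simp
    show "real beta \<ge> 1" using beta by simp
    show "p \<ge> 0" unfolding p_def by (simp add: sum_nonneg)
    show "q \<ge> 0" unfolding q_def by (simp add: sum_nonneg)
    show "A \<ge> 0" unfolding A_def by (simp add: sum_nonneg)
    show "real (rho N Sopt T St mv) \<le> p + q + A" using r1 KR by (metis of_nat_le_iff)
    show "X2 \<le> 2 * real beta * (p + q + A)" by (rule X)
    show "C \<le> 2 * real (rho N Sopt T Stb mvb)" unfolding C_def using r3 by (metis of_nat_le_iff of_nat_mult of_nat_numeral)
    show "A \<le> Op" unfolding A_def Op_def using Ae by (metis of_nat_le_iff of_nat_sum)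
    show "p^2 \<le> Op * C" by (rule cs1)
    show "q^2 \<le> Op * X2" by (rule cs2)
  qed
  then show ?thesis unfolding Op_def .
qed

end
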